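(* Let $k\ge2$, $r\in\{k-1,k,k+1\}$ and let $K$ be a triangle or an axis-parallel rectangle. Then the sum defining $V^{r-1,k}_h(K)$ is direct, and the sequence $$0\longrightarrow\mathbb R\xrightarrow{\ \subset\ }\Sigma^r_h(K)\xrightarrow{\ \nabla\ }V^{r-1,k}_h(K)\xrightarrow{\ \nabla\times\ }W^{k-1}_h(K)\longrightarrow 0$$ is a complex and is exact.
   Context: Notation: for $\bm u=(u_1,u_2)^T$, $\nabla\times\bm u=\partial_{x_1}u_2-\partial_{x_2}u_1$; for a scalar $v$, $\bm\nabla\times v=(\partial_{x_2}v,-\partial_{x_1}v)^T$. $P_i(K)$ is the space of polynomials of total degree at most $i$ on $K$, $\bm P_i(K)=[P_i(K)]^2$, $\widetilde P_i$ the homogeneous polynomials of degree $i$, $Q_{i,j}(K)$ the polynomials of degree at most $i$ in $x_1$ and at most $j$ in $x_2$, $Q_i=Q_{i,i}$; spaces with negative index are $\{0\}$. $\bm x=(x_1,x_2)^T$, $\bm x^\perp=(-x_2,x_1)^T$. The Poincaré operator is $(\mathfrak p u)(\bm x)=\int_0^1 t\,\bm x^\perp u(t\bm x)\,dt$ (origin at $0\in\mathbb R^2$). An element $K$ is either a triangle with barycentric coordinates $\lambda_1,\lambda_2,\lambda_3$, or an axis-parallel rectangle $K=(x_l,x_r)\times(y_d,y_u)$ with $h_x=x_r-x_l$, $h_y=y_u-y_d$; $\bm\tau_e$ denotes a unit tangent to an edge $e$. Bubbles: $B_t=\lambda_1\lambda_2\lambda_3$, $B_r=h_x^{-2}h_y^{-2}(x_1-x_l)(x_1-x_r)(x_2-y_d)(x_2-y_u)$.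 Local spaces, for an integer $k\ge2$ and $r\in\{k-1,k,k+1\}$: $\Sigma^r_h(K)=P_r(K)$ (triangle) or $Q_r(K)$ (rectangle). For a triangle, $W^{k-1}_h(K)=P_{k-1}(K)$ if $k\ge4$ and $P_{k-1}(K)\oplus\mathrm{span}\{B_t\}$ if $k=2,3$; for a rectangle, $W^{k-1}_h(K)=Q_{k-1}(K)$ if $k\ge3$ and $Q_1(K)\oplus\mathrm{span}\{B_r\}$ if $k=2$. Modified Poincaré operator: $\widetilde{\mathfrak p}w=\mathfrak pw-\nabla\Phi w$, where $\Phi$ is a fixed linear map from $W^{k-1}_h(K)$ into polynomials such that for every $w$ the function $(\mathfrak p w-\nabla\Phi w)\cdot\bm\tau_e$ is constant on each edge $e$ of $K$, and such that $\Phi(W^{k-1}_h(K)\cap P_j(K))\subset P_{j+1}(K)$ for triangles, resp. $\Phi(W^{k-1}_h(K)\cap Q_j(K))\subset Q_{j+1}(K)$ for rectangles, for every $j\ge0$. Then $V^{r-1,k}_h(K)=\nabla\Sigma^r_h(K)+\mathfrak pW^{k-1}_h(K)$ when $r=k+1$, or when $r=k$ and $k\ge4$; and $V^{r-1,k}_h(K)=\nabla\Sigma^r_h(K)+\widetilde{\mathfrak p}W^{k-1}_h(K)$ when $r=k-1$, or when $r=k$ and $k\in\{2,3\}$. *)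

theory Defs
  imports "HOL-Analysis.Analysis"
begin

text \<open>Polynomial spaces are spaces of polynomial functions on the whole plane
  (a polynomial is determined by its restriction to the open element K).\<close>

type_synonym pt = "real \<times> real"
type_synonym sfield = "pt \<Rightarrow> real"
type_synonym vfield = "pt \<Rightarrow> pt"

definition Ptot :: "nat \<Rightarrow> sfield set" where
  "Ptot i = {f. \<exists>c :: nat \<Rightarrow> nat \<Rightarrow> real.
     f = (\<lambda>z. \<Sum>(a,b)\<in>{(a,b). a + b \<le> i}. c a b * fst z ^ a * snd z ^ b)}"

definition Qdeg :: "nat \<Rightarrow> nat \<Rightarrow> sfield set" where
  "Qdeg i j = {f. \<exists>c :: nat \<Rightarrow> nat \<Rightarrow> real.
     f = (\<lambda>z. \<Sum>a\<le>i. \<Sum>b\<le>j. c a b * fst z ^ a * snd z ^ b)}"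

definition Poly :: "sfield set" where
  "Poly = (\<Union>i. Ptot i)"

definition d1 :: "sfield \<Rightarrow> sfield" where
  "d1 f z = deriv (\<lambda>t. f (t, snd z)) (fst z)"
definition d2 :: "sfield \<Rightarrow> sfield" where
  "d2 f z = deriv (\<lambda>t. f (fst z, t)) (snd z)"

definition grad :: "sfield \<Rightarrow> vfield" where
  "grad f z = (d1 f z, d2 f z)"

definition curl :: "vfield \<Rightarrow> sfield" where
  "curl u z = d1 (\<lambda>y. snd (u y)) z - d2 (\<lambda>y. fst (u y)) z"

definition perp :: "pt \<Rightarrow> pt" where
  "perp x = (- snd x, fst x)"

definition poinc :: "sfield \<Rightarrow> vfield" where
  "poinc u x = integral {0..1} (\<lambda>t. t * u (t *\<^sub>R x)) *\<^sub>R perp x"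

text \<open>Elements: a triangle with vertices a1 a2 a3, or the rectangle
  (xl,xr) \<times> (yd,yu).\<close>
datatype elem = Tri pt pt pt | Rect real real real real

definition det2 :: "pt \<Rightarrow> pt \<Rightarrow> real" where
  "det2 u v = fst u * snd v - snd u * fst v"

fun valid_elem :: "elem \<Rightarrow> bool" where
  "valid_elem (Tri a1 a2 a3) = (det2 (a2 - a1) (a3 - a1) \<noteq> 0)"
| "valid_elem (Rect xl xr yd yu) = (xl < xr \<and> yd < yu)"

text \<open>Barycentric coordinates of a triangle (the affine functions with
  lambda_i(a_j) = delta_ij).\<close>
definition bary1 :: "pt \<Rightarrow> pt \<Rightarrow> pt \<Rightarrow> sfield" where
  "bary1 a1 a2 a3 x = det2 (a2 - x) (a3 - x) / det2 (a2 - a1) (a3 - a1)"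

definition bubble_tri :: "pt \<Rightarrow> pt \<Rightarrow> pt \<Rightarrow> sfield" where
  "bubble_tri a1 a2 a3 x = bary1 a1 a2 a3 x * bary1 a2 a3 a1 x * bary1 a3 a1 a2 x"

definition bubble_rect :: "real \<Rightarrow> real \<Rightarrow> real \<Rightarrow> real \<Rightarrow> sfield" where
  "bubble_rect xl xr yd yu x =
     (xr - xl) powi (-2) * (yu - yd) powi (-2) *
     (fst x - xl) * (fst x - xr) * (snd x - yd) * (snd x - yu)"

fun edges :: "elem \<Rightarrow> (pt \<times> pt) set" where
  "edges (Tri a1 a2 a3) = {(a1, a2), (a2, a3), (a3, a1)}"
| "edges (Rect xl xr yd yu) =
     {((xl, yd), (xr, yd)), ((xr, yd), (xr, yu)), ((xr, yu), (xl, yu)), ((xl, yu), (xl, yd))}"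

definition tangent :: "pt \<times> pt \<Rightarrow> pt" where
  "tangent e = (1 / norm (snd e - fst e)) *\<^sub>R (snd e - fst e)"

fun Sigma_h :: "nat \<Rightarrow> elem \<Rightarrow> sfield set" where
  "Sigma_h r (Tri a1 a2 a3) = Ptot r"
| "Sigma_h r (Rect xl xr yd yu) = Qdeg r r"

fun W_h :: "nat \<Rightarrow> elem \<Rightarrow> sfield set" where
  "W_h k (Tri a1 a2 a3) =
     (if k \<ge> 4 then Ptot (k - 1)
      else {\<lambda>x. p x + c * bubble_tri a1 a2 a3 x | p c. p \<in> Ptot (k - 1)})"
| "W_h k (Rect xl xr yd yu) =
     (if k \<ge> 3 then Qdeg (k - 1) (k - 1)
      else {\<lambda>x. p x + c * bubble_rect xl xr yd yu x | p c. p \<in> Qdeg 1 1})"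

fun Deg :: "elem \<Rightarrow> nat \<Rightarrow> sfield set" where
  "Deg (Tri a1 a2 a3) j = Ptot j"
| "Deg (Rect xl xr yd yu) j = Qdeg j j"

definition admissible_Phi :: "nat \<Rightarrow> elem \<Rightarrow> (sfield \<Rightarrow> sfield) \<Rightarrow> bool" where
  "admissible_Phi k K Phi \<longleftrightarrow>
     (\<forall>w1\<in>W_h k K. \<forall>w2\<in>W_h k K. \<forall>a b::real.
        Phi (\<lambda>x. a * w1 x + b * w2 x) = (\<lambda>x. a * Phi w1 x + b * Phi w2 x)) \<and>
     (\<forall>w\<in>W_h k K. Phi w \<in> Poly) \<and>
     (\<forall>w\<in>W_h k K. \<forall>e\<in>edges K. \<exists>c. \<forall>x\<in>closed_segment (fst e) (snd e).
        inner (poinc w x - grad (Phi w) x) (tangent e) = c) \<and>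
     (\<forall>j. \<forall>w\<in>W_h k K \<inter> Deg K j. Phi w \<in> Deg K (Suc j))"

definition poinc_mod :: "(sfield \<Rightarrow> sfield) \<Rightarrow> sfield \<Rightarrow> vfield" where
  "poinc_mod Phi w x = poinc w x - grad (Phi w) x"

definition uses_mod :: "nat \<Rightarrow> nat \<Rightarrow> bool" where
  "uses_mod k r \<longleftrightarrow> r = k - 1 \<or> (r = k \<and> k \<in> {2, 3})"

definition Psum :: "nat \<Rightarrow> nat \<Rightarrow> elem \<Rightarrow> (sfield \<Rightarrow> sfield) \<Rightarrow> vfield set" where
  "Psum r k K Phi = (if uses_mod k r then poinc_mod Phi ` W_h k K else poinc ` W_h k K)"

definition V_h :: "nat \<Rightarrow> nat \<Rightarrow> elem \<Rightarrow> (sfield \<Rightarrow> sfield) \<Rightarrow> vfield set" where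
  "V_h r k K Phi = {\<lambda>x. g x + q x | g q. g \<in> grad ` Sigma_h r K \<and> q \<in> Psum r k K Phi}"

end

theory Submission imports Defs begin

inductive_set M :: "sfield set" where
  mono: "(\<lambda>z. c * fst z ^ a * snd z ^ b) \<in> M"
| add: "f \<in> M \<Longrightarrow> g \<in> M \<Longrightarrow> (\<lambda>z. f z + g z) \<in> M"

lemma M_mono_mult: "f \<in> M \<Longrightarrow> (\<lambda>z. (c * fst z ^ a * snd z ^ b) * f z) \<in> M"
proof (induction rule: M.induct)
  case (mono c' a' b')
  have "(\<lambda>z. (c * fst z ^ a * snd z ^ b) * (c' * fst z ^ a' * snd z ^ b'))
     = (\<lambda>z. (c*c') * fst z ^ (a+a') * snd z ^ (b+b'))"
    by (simp add: fun_eq_iff power_add)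
  then show ?case using M.mono by metis
next
  case (add f g)
  then show ?case using M.add[OF add.IH] by (simp add: distrib_left)
qed

lemma M_mult: "f \<in> M \<Longrightarrow> g \<in> M \<Longrightarrow> (\<lambda>z. f z * g z) \<in> M"
proof (induction rule: M.induct)
  case (mono c a b)
  then show ?case using M_mono_mult by blast
next
  case (add f1 f2)
  then show ?case using M.add[OF add.IH] by (simp add: distrib_right)
qed

lemma M_const: "(\<lambda>z. c) \<in> M"
  using M.mono[of c 0 0] by simp
lemma M_fst: "fst \<in> M"
  using M.mono[of 1 1 0] by simp
lemma M_snd: "snd \<in> M"
  using M.mono[of 1 0 1] by simp
lemma M_scale: "f \<in> M \<Longrightarrow> (\<lambda>z. c * f z) \<in> M"
  using M_mult[OF M_const] by blast
lemma M_neg: "f \<in> M \<Longrightarrow> (\<lambda>z. - f z) \<in> M"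
  using M_scale[of f "-1"] by simp
lemma M_diff: "f \<in> M \<Longrightarrow> g \<in> M \<Longrightarrow> (\<lambda>z. f z - g z) \<in> M"
  using M.add[OF _ M_neg] by simp

lemma M_sum: "finite S \<Longrightarrow> (\<And>i. i \<in> S \<Longrightarrow> f i \<in> M) \<Longrightarrow> (\<lambda>z. \<Sum>i\<in>S. f i z) \<in> M"
proof (induction rule: finite_induct)
  case empty then show ?case using M_const[of 0] by simp
next
  case (insert x F)
  then show ?case using M.add[of "f x" "\<lambda>z. \<Sum>i\<in>F. f i z"] by simp
qed

lemma Ptot_M: "Ptot i \<subseteq> M"
proof
  fix f assume "f \<in> Ptot i"
  then obtain c where f: "f = (\<lambda>z. \<Sum>(a,b)\<in>{(a,b). a + b \<le> i}. c a b * fst z ^ a * snd z ^ b)"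
    unfolding Ptot_def by blast
  have fin: "finite {(a,b). a + b \<le> (i::nat)}"
    by (rule finite_subset[of _ "{..i} \<times> {..i}"]) auto
  show "f \<in> M" unfolding f
    by (rule M_sum[OF fin]) (auto intro: M.mono)
qed

lemma Qdeg_M: "Qdeg i j \<subseteq> M"
proof
  fix f assume "f \<in> Qdeg i j"
  then obtain c where f: "f = (\<lambda>z. \<Sum>a\<le>i. \<Sum>b\<le>j. c a b * fst z ^ a * snd z ^ b)"
    unfolding Qdeg_def by blast
  show "f \<in> M" unfolding f
    by (intro M_sum) (auto intro: M.mono)
qed

lemma Poly_M: "Poly \<subseteq> M"
  unfolding Poly_def using Ptot_M by blast

lemma bary_M: "bary1 a1 a2 a3 \<in> M"
proof -
  have "bary1 a1 a2 a3 = (\<lambda>x. (1 / det2 (a2 - a1) (a3 - a1)) *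
     ((fst a2 - fst x) * (snd a3 - snd x) - (snd a2 - snd x) * (fst a3 - fst x)))"
    by (simp add: fun_eq_iff bary1_def det2_def)
  also have "\<dots> \<in> M"
    by (intro M_scale M_diff M_mult M_const M_fst M_snd)
  finally show ?thesis .
qed

lemma bubble_tri_M: "bubble_tri a1 a2 a3 \<in> M"
  unfolding bubble_tri_def[abs_def] by (intro M_mult bary_M)

lemma bubble_rect_M: "bubble_rect xl xr yd yu \<in> M"
  unfolding bubble_rect_def[abs_def]
  by (intro M_scale M_diff M_mult M_const M_fst M_snd)

lemma W_M: "W_h k K \<subseteq> M"
proof (cases K)
  case (Tri a1 a2 a3)
  then show ?thesis using Ptot_M
    by (auto intro!: M.add M_scale bubble_tri_M)
next
  case (Rect xl xr yd yu)
  then show ?thesis using Qdeg_M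
    by (auto intro!: M.add M_scale bubble_rect_M)
qed

lemma Sigma_M: "Sigma_h r K \<subseteq> M"
  by (cases K) (use Ptot_M Qdeg_M in auto)

lemma d1_mono_has: "((\<lambda>t. c * fst (t,y) ^ a * snd (t,y) ^ b) has_real_derivative
   (c * real a) * t ^ (a - 1) * y ^ b) (at t)"
  by (auto intro!: derivative_eq_intros)

lemma d2_mono_has: "((\<lambda>t. c * fst (x,t) ^ a * snd (x,t) ^ b) has_real_derivative
   (c * real b) * x ^ a * t ^ (b - 1)) (at t)"
  by (auto intro!: derivative_eq_intros)

lemma d1_ex: "f \<in> M \<Longrightarrow> \<exists>g\<in>M. \<forall>t y. ((\<lambda>t. f (t,y)) has_real_derivative g (t,y)) (at t)"
proof (induction rule: M.induct)
  case (mono c a b)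
  show ?case
    by (rule bexI[of _ "\<lambda>z. (c * real a) * fst z ^ (a - 1) * snd z ^ b"])
       (use d1_mono_has M.mono in auto)
next
  case (add f g)
  then obtain f' g' where "f' \<in> M" "g' \<in> M"
    "\<forall>t y. ((\<lambda>t. f (t,y)) has_real_derivative f' (t,y)) (at t)"
    "\<forall>t y. ((\<lambda>t. g (t,y)) has_real_derivative g' (t,y)) (at t)" by blast
  then show ?case
    by (intro bexI[of _ "\<lambda>z. f' z + g' z"]) (auto intro: M.add DERIV_add)
qed

lemma d2_ex: "f \<in> M \<Longrightarrow> \<exists>g\<in>M. \<forall>t x. ((\<lambda>t. f (x,t)) has_real_derivative g (x,t)) (at t)"
proof (induction rule: M.induct)
  case (mono c a b)
  show ?case
    by (rule bexI[of _ "\<lambda>z. (c * real b) * fst z ^ a * snd z ^ (b - 1)"])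
       (use d2_mono_has M.mono in auto)
next
  case (add f g)
  then obtain f' g' where "f' \<in> M" "g' \<in> M"
    "\<forall>t y. ((\<lambda>t. f (y,t)) has_real_derivative f' (y,t)) (at t)"
    "\<forall>t y. ((\<lambda>t. g (y,t)) has_real_derivative g' (y,t)) (at t)" by blast
  then show ?case
    by (intro bexI[of _ "\<lambda>z. f' z + g' z"]) (auto intro: M.add DERIV_add)
qed

lemma d1_has: assumes "f \<in> M" shows "((\<lambda>t. f (t,y)) has_real_derivative d1 f (t,y)) (at t)"
  and "d1 f \<in> M"
proof -
  obtain g where g: "g \<in> M" "\<forall>t y. ((\<lambda>t. f (t,y)) has_real_derivative g (t,y)) (at t)"
    using d1_ex[OF assms] by blast
  have eq: "d1 f = g"
    using g(2) by (auto simp: fun_eq_iff d1_def intro!: DERIV_imp_deriv)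
  show "((\<lambda>t. f (t,y)) has_real_derivative d1 f (t,y)) (at t)" "d1 f \<in> M"
    using g eq by auto
qed

lemma d2_has: assumes "f \<in> M" shows "((\<lambda>t. f (x,t)) has_real_derivative d2 f (x,t)) (at t)"
  and "d2 f \<in> M"
proof -
  obtain g where g: "g \<in> M" "\<forall>t x. ((\<lambda>t. f (x,t)) has_real_derivative g (x,t)) (at t)"
    using d2_ex[OF assms] by blast
  have eq: "d2 f = g"
    using g(2) by (auto simp: fun_eq_iff d2_def intro!: DERIV_imp_deriv)
  show "((\<lambda>t. f (x,t)) has_real_derivative d2 f (x,t)) (at t)" "d2 f \<in> M"
    using g eq by auto
qed

lemma d1_add: "f \<in> M \<Longrightarrow> g \<in> M \<Longrightarrow> d1 (\<lambda>z. f z + g z) = (\<lambda>z. d1 f z + d1 g z)"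
  unfolding fun_eq_iff d1_def[of "\<lambda>z. f z + g z"]
  by (auto intro!: DERIV_imp_deriv DERIV_add d1_has)

lemma d2_add: "f \<in> M \<Longrightarrow> g \<in> M \<Longrightarrow> d2 (\<lambda>z. f z + g z) = (\<lambda>z. d2 f z + d2 g z)"
  unfolding fun_eq_iff d2_def[of "\<lambda>z. f z + g z"]
  by (auto intro!: DERIV_imp_deriv DERIV_add d2_has)

lemma d1_neg: "f \<in> M \<Longrightarrow> d1 (\<lambda>z. - f z) = (\<lambda>z. - d1 f z)"
  unfolding fun_eq_iff d1_def[of "\<lambda>z. - f z"]
  by (auto intro!: DERIV_imp_deriv DERIV_minus d1_has)

lemma d2_neg: "f \<in> M \<Longrightarrow> d2 (\<lambda>z. - f z) = (\<lambda>z. - d2 f z)"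
  unfolding fun_eq_iff d2_def[of "\<lambda>z. - f z"]
  by (auto intro!: DERIV_imp_deriv DERIV_minus d2_has)

lemma d1_mono: "d1 (\<lambda>z. c * fst z ^ a * snd z ^ b) = (\<lambda>z. (c * real a) * fst z ^ (a - 1) * snd z ^ b)"
  unfolding fun_eq_iff d1_def using d1_mono_has by (auto intro!: DERIV_imp_deriv)

lemma d2_mono: "d2 (\<lambda>z. c * fst z ^ a * snd z ^ b) = (\<lambda>z. (c * real b) * fst z ^ a * snd z ^ (b - 1))"
  unfolding fun_eq_iff d2_def using d2_mono_has by (auto intro!: DERIV_imp_deriv)

lemma d_const: "d1 (\<lambda>z. c) = (\<lambda>z. 0)" "d2 (\<lambda>z. c) = (\<lambda>z. 0)"
  using d1_mono[of c 0 0] d2_mono[of c 0 0] by simp_all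

lemma mixed: "f \<in> M \<Longrightarrow> d2 (d1 f) = d1 (d2 f)"
proof (induction rule: M.induct)
  case (mono c a b)
  show ?case unfolding d1_mono d2_mono by (simp only: d1_mono d2_mono mult_ac)
next
  case (add f g)
  then show ?case
    by (simp add: d1_add d2_add d1_has d2_has)
qed

lemma int_pow: "((\<lambda>t::real. t ^ n) has_integral (1 / real (Suc n))) {0..1}"
proof -
  have "((\<lambda>t::real. t ^ n) has_integral ((\<lambda>t. t ^ Suc n / real (Suc n)) 1 - (\<lambda>t. t ^ Suc n / real (Suc n)) 0)) {0..1}"
  proof (rule fundamental_theorem_of_calculus)
    fix x :: real
    have "((\<lambda>t. t ^ Suc n / real (Suc n)) has_real_derivative (real (Suc n) * x ^ (Suc n - Suc 0)) / real (Suc n)) (at x within {0..1})"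
      by (rule DERIV_cdivide[OF DERIV_pow])
    then show "((\<lambda>t. t ^ Suc n / real (Suc n)) has_vector_derivative x ^ n) (at x within {0..1})"
      by (simp add: has_real_derivative_iff_has_vector_derivative[symmetric] del: of_nat_Suc)
  qed simp
  then show ?thesis by simp
qed

lemma aux0: "N = A + B \<Longrightarrow> (q::real)*A*U*V + q*B*U*V = q*N*U*V"
  by (simp add: algebra_simps)

lemma aux_sum: "N = A + B \<Longrightarrow> N \<noteq> 0 \<Longrightarrow> U1 = U \<Longrightarrow> V2 = V \<Longrightarrow>
   c/N*A*U1*V + c/N*B*U*V2 = (c::real)*U*V"
  using aux0[of N A B "c/N" U V] by simp

lemma poinc_ex: "w \<in> M \<Longrightarrow> \<exists>J\<in>M. (\<forall>x. ((\<lambda>t. t * w (t *\<^sub>R x)) has_integral J x) {0..1})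
   \<and> (\<forall>x. d1 (\<lambda>y. J y * fst y) x + d2 (\<lambda>y. J y * snd y) x = w x)"
proof (induction rule: M.induct)
  case (mono c a b)
  define J where "J = (\<lambda>z::pt. (c / real (a + b + 2)) * fst z ^ a * snd z ^ b)"
  have J: "J \<in> M" unfolding J_def by (rule M.mono)
  have int: "((\<lambda>t. t * (c * fst (t *\<^sub>R x) ^ a * snd (t *\<^sub>R x) ^ b)) has_integral J x) {0..1}" for x
  proof -
    have "((\<lambda>t. (c * fst x ^ a * snd x ^ b) * t ^ (a + b + 1)) has_integral
        (c * fst x ^ a * snd x ^ b) * (1 / real (Suc (a + b + 1)))) {0..1}"
      by (rule has_integral_mult_right[OF int_pow])
    moreover have "(\<lambda>t. t * (c * fst (t *\<^sub>R x) ^ a * snd (t *\<^sub>R x) ^ b)) =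
        (\<lambda>t. (c * fst x ^ a * snd x ^ b) * t ^ (a + b + 1))"
      by (simp add: fun_eq_iff power_mult_distrib power_add mult_ac)
    moreover have "(c * fst x ^ a * snd x ^ b) * (1 / real (Suc (a + b + 1))) = J x"
      by (simp add: J_def)
    ultimately show ?thesis by simp
  qed
  have e1: "(\<lambda>y. J y * fst y) = (\<lambda>z. (c / real (a + b + 2)) * fst z ^ Suc a * snd z ^ b)"
    by (simp add: J_def fun_eq_iff mult_ac)
  have e2: "(\<lambda>y. J y * snd y) = (\<lambda>z. (c / real (a + b + 2)) * fst z ^ a * snd z ^ Suc b)"
    by (simp add: J_def fun_eq_iff mult_ac)
  have d: "d1 (\<lambda>y. J y * fst y) x + d2 (\<lambda>y. J y * snd y) x = c * fst x ^ a * snd x ^ b" for x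
    unfolding e1 e2 d1_mono d2_mono
    by (rule aux_sum) auto
  show ?case using J int d by blast
next
  case (add f g)
  then obtain Jf Jg where Jf: "Jf \<in> M" "\<forall>x. ((\<lambda>t. t * f (t *\<^sub>R x)) has_integral Jf x) {0..1}"
     "\<forall>x. d1 (\<lambda>y. Jf y * fst y) x + d2 (\<lambda>y. Jf y * snd y) x = f x"
   and Jg: "Jg \<in> M" "\<forall>x. ((\<lambda>t. t * g (t *\<^sub>R x)) has_integral Jg x) {0..1}"
     "\<forall>x. d1 (\<lambda>y. Jg y * fst y) x + d2 (\<lambda>y. Jg y * snd y) x = g x" by blast
  have int: "((\<lambda>t. t * (f (t *\<^sub>R x) + g (t *\<^sub>R x))) has_integral (Jf x + Jg x)) {0..1}" for x
    using has_integral_add[OF Jf(2)[rule_format, of x] Jg(2)[rule_format, of x]]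
    by (simp add: distrib_left)
  have m1: "(\<lambda>y. Jf y * fst y) \<in> M" "(\<lambda>y. Jg y * fst y) \<in> M"
    "(\<lambda>y. Jf y * snd y) \<in> M" "(\<lambda>y. Jg y * snd y) \<in> M"
    using Jf(1) Jg(1) M_fst M_snd by (auto intro: M_mult)
  have e1: "(\<lambda>y. (Jf y + Jg y) * fst y) = (\<lambda>y. Jf y * fst y + Jg y * fst y)"
       "(\<lambda>y. (Jf y + Jg y) * snd y) = (\<lambda>y. Jf y * snd y + Jg y * snd y)"
    by (simp_all add: fun_eq_iff distrib_right)
  have d: "d1 (\<lambda>y. (Jf y + Jg y) * fst y) x + d2 (\<lambda>y. (Jf y + Jg y) * snd y) x = f x + g x" for x
    unfolding e1 d1_add[OF m1(1,2)] d2_add[OF m1(3,4)]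
    using Jf(3)[rule_format, of x] Jg(3)[rule_format, of x] by linarith
  show ?case
    by (rule bexI[of _ "\<lambda>z. Jf z + Jg z"]) (use int d M.add[OF Jf(1) Jg(1)] in auto)
qed

definition Mv :: "vfield \<Rightarrow> bool" where
  "Mv u \<longleftrightarrow> (\<lambda>y. fst (u y)) \<in> M \<and> (\<lambda>y. snd (u y)) \<in> M"

lemma curl_add: "Mv u \<Longrightarrow> Mv v \<Longrightarrow> curl (\<lambda>x. u x + v x) = (\<lambda>x. curl u x + curl v x)"
  unfolding Mv_def curl_def by (simp add: d1_add d2_add fun_eq_iff algebra_simps)

lemma d1_diff: "f \<in> M \<Longrightarrow> g \<in> M \<Longrightarrow> d1 (\<lambda>z. f z - g z) = (\<lambda>z. d1 f z - d1 g z)"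
  unfolding fun_eq_iff d1_def[of "\<lambda>z. f z - g z"]
  by (auto intro!: DERIV_imp_deriv DERIV_diff d1_has)

lemma d2_diff: "f \<in> M \<Longrightarrow> g \<in> M \<Longrightarrow> d2 (\<lambda>z. f z - g z) = (\<lambda>z. d2 f z - d2 g z)"
  unfolding fun_eq_iff d2_def[of "\<lambda>z. f z - g z"]
  by (auto intro!: DERIV_imp_deriv DERIV_diff d2_has)

lemma curl_diff: "Mv u \<Longrightarrow> Mv v \<Longrightarrow> curl (\<lambda>x. u x - v x) = (\<lambda>x. curl u x - curl v x)"
  unfolding Mv_def curl_def by (simp add: d1_diff d2_diff fun_eq_iff algebra_simps)

lemma grad_Mv: "s \<in> M \<Longrightarrow> Mv (grad s)"
  unfolding Mv_def grad_def by (simp add: d1_has d2_has)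

lemma curl_grad: "s \<in> M \<Longrightarrow> curl (grad s) = (\<lambda>x. 0)"
  unfolding curl_def grad_def by (simp add: mixed)

lemma grad_const: "grad (\<lambda>x. c) = (\<lambda>x. 0)"
  unfolding grad_def[abs_def] by (simp add: d_const zero_prod_def)

lemma poinc_zero: "poinc (\<lambda>x. 0) = (\<lambda>x. 0)"
  unfolding poinc_def[abs_def] by simp

lemma poinc_props: assumes "w \<in> M" shows "Mv (poinc w)" "curl (poinc w) = w"
proof -
  obtain J where J: "J \<in> M" "\<forall>x. ((\<lambda>t. t * w (t *\<^sub>R x)) has_integral J x) {0..1}"
     "\<forall>x. d1 (\<lambda>y. J y * fst y) x + d2 (\<lambda>y. J y * snd y) x = w x"
    using poinc_ex[OF assms] by blast
  have p: "poinc w = (\<lambda>x. J x *\<^sub>R perp x)"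
    using J(2) by (simp add: fun_eq_iff poinc_def integral_unique)
  have e1: "(\<lambda>y. fst (poinc w y)) = (\<lambda>y. - (J y * snd y))"
    and e2: "(\<lambda>y. snd (poinc w y)) = (\<lambda>y. J y * fst y)"
    by (simp_all add: p perp_def fun_eq_iff)
  have m: "(\<lambda>y. J y * snd y) \<in> M" "(\<lambda>y. J y * fst y) \<in> M"
    using J(1) M_fst M_snd by (auto intro: M_mult)
  show "Mv (poinc w)" unfolding Mv_def e1 e2 using m by (auto intro: M_neg)
  show "curl (poinc w) = w" unfolding curl_def e1 e2 d2_neg[OF m(1)]
    using J(3) by (simp add: fun_eq_iff)
qed

lemma grad_zero_const: assumes "s \<in> M" "grad s = (\<lambda>x. 0)" shows "s = (\<lambda>x. s (0,0))"
proof
  fix z :: pt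
  obtain x y where z: "z = (x,y)" by (cases z)
  have g: "d1 s (a,b) = 0 \<and> d2 s (a,b) = 0" for a b
    using assms(2) unfolding grad_def fun_eq_iff by (auto simp: zero_prod_def)
  have g1: "d1 s p = 0" and g2: "d2 s p = 0" for p
    using g[of "fst p" "snd p"] by auto
  have "s (x,y) = s (0,y)"
    using DERIV_isconst_all[of "\<lambda>t. s (t,y)" x 0] d1_has(1)[OF assms(1), of y] g1 by simp
  also have "\<dots> = s (0,0)"
    using DERIV_isconst_all[of "\<lambda>t. s (0,t)" y 0] d2_has(1)[OF assms(1), of 0] g2 by simp
  finally show "s z = s (0,0)" using z by simp
qed

lemma const_Ptot: "(\<lambda>z. c) \<in> Ptot i"
proof -
  let ?S = "{(a,b). a + b \<le> (i::nat)}"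
  have fin: "finite ?S"
    by (rule finite_subset[of _ "{..i} \<times> {..i}"]) auto
  have "(\<Sum>(a,b)\<in>?S. (if a = 0 \<and> b = 0 then c else 0) * fst z ^ a * snd z ^ b)
      = (\<Sum>p\<in>?S. if p = (0,0) then c else 0)" for z :: pt
    by (rule sum.cong) (auto split: if_split_asm)
  also have "\<dots> = c" using fin by (simp add: sum.delta)
  finally show ?thesis unfolding Ptot_def
    by (intro CollectI exI[of _ "\<lambda>a b. if a = 0 \<and> b = 0 then c else 0"]) (simp add: fun_eq_iff)
qed

lemma const_Qdeg: "(\<lambda>z. c) \<in> Qdeg i j"
proof -
  have inner: "(\<Sum>b\<le>j. (if a = 0 then if b = 0 then c else 0 else 0) * fst z ^ a * snd z ^ b) = (if a = 0 then c else 0)"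
    for a and z :: pt
  proof -
    have "(\<Sum>b\<le>j. (if a = 0 then if b = 0 then c else 0 else 0) * fst z ^ a * snd z ^ b)
       = (\<Sum>b\<le>j. if b = 0 then (if a = 0 then c else 0) else 0)"
      by (rule sum.cong) auto
    then show ?thesis by simp
  qed
  have "(\<Sum>a\<le>i. \<Sum>b\<le>j. (if a = 0 then if b = 0 then c else 0 else 0) * fst z ^ a * snd z ^ b) = c" for z :: pt
    unfolding inner by simp
  then show ?thesis unfolding Qdeg_def
    by (intro CollectI exI[of _ "\<lambda>a b. if a = 0 then if b = 0 then c else 0 else 0"]) (simp add: fun_eq_iff)
qed

lemma const_Sigma: "(\<lambda>z. c) \<in> Sigma_h r K"
  by (cases K) (auto simp: const_Ptot const_Qdeg)

lemma zero_W: "(\<lambda>z. 0) \<in> W_h k K"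
proof (cases K)
  case (Tri a1 a2 a3)
  then show ?thesis using const_Ptot[of 0]
    by (auto intro!: exI[of _ "\<lambda>z. 0"] exI[of _ 0])
next
  case (Rect xl xr yd yu)
  then show ?thesis using const_Qdeg[of 0]
    by (auto intro!: exI[of _ "\<lambda>z. 0"] exI[of _ 0])
qed

theorem mainTheorem3:
  fixes k r :: nat and K :: elem and Phi :: "sfield \<Rightarrow> sfield"
  assumes "k \<ge> 2"
    and "r \<in> {k - 1, k, k + 1}"
    and "valid_elem K"
    and "uses_mod k r \<longrightarrow> admissible_Phi k K Phi"
  shows "grad ` Sigma_h r K \<inter> Psum r k K Phi = {(\<lambda>x. 0)}
    \<and> inj (\<lambda>c::real. (\<lambda>x::pt. c))
    \<and> (\<forall>c::real. (\<lambda>x::pt. c) \<in> Sigma_h r K)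
    \<and> grad ` Sigma_h r K \<subseteq> V_h r k K Phi
    \<and> curl ` V_h r k K Phi \<subseteq> W_h k K
    \<and> (\<forall>s\<in>Sigma_h r K. curl (grad s) = (\<lambda>x. 0))
    \<and> {s \<in> Sigma_h r K. grad s = (\<lambda>x. 0)} = range (\<lambda>c::real. (\<lambda>x::pt. c))
    \<and> {v \<in> V_h r k K Phi. curl v = (\<lambda>x. 0)} = grad ` Sigma_h r K
    \<and> curl ` V_h r k K Phi = W_h k K"
proof -
  define Q where "Q w = (if uses_mod k r then poinc_mod Phi w else poinc w)" for w
  have PsQ: "Psum r k K Phi = Q ` W_h k K"
    unfolding Psum_def Q_def by auto
  have Qp: "Mv (Q w) \<and> curl (Q w) = w" if w: "w \<in> W_h k K" for w
  proof (cases "uses_mod k r")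
    case True
    then have adm: "admissible_Phi k K Phi" using assms(4) by blast
    have wM: "w \<in> M" using w W_M by blast
    have pM: "Phi w \<in> M" using adm w Poly_M unfolding admissible_Phi_def by blast
    have e: "Q w = (\<lambda>x. poinc w x - grad (Phi w) x)"
      using True by (simp add: Q_def poinc_mod_def[abs_def])
    have "Mv (Q w)" unfolding e using poinc_props(1)[OF wM] grad_Mv[OF pM]
      unfolding Mv_def by (auto intro: M_diff)
    moreover have "curl (Q w) = w"
      unfolding e curl_diff[OF poinc_props(1)[OF wM] grad_Mv[OF pM]]
      by (simp add: poinc_props(2)[OF wM] curl_grad[OF pM])
    ultimately show ?thesis by blast
  next
    case False
    have wM: "w \<in> M" using w W_M by blast
    then show ?thesis using False poinc_props[OF wM] by (simp add: Q_def)
  qed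
  have Q0: "Q (\<lambda>x. 0) = (\<lambda>x. 0)"
  proof (cases "uses_mod k r")
    case True
    then have adm: "admissible_Phi k K Phi" using assms(4) by blast
    have "Phi (\<lambda>x. 0 * 0 + 0 * 0) = (\<lambda>x. 0 * Phi (\<lambda>x. 0) x + 0 * Phi (\<lambda>x. 0) x)"
      using conjunct1[OF adm[unfolded admissible_Phi_def], rule_format, OF zero_W zero_W, of 0 0] by simp
    then have "Phi (\<lambda>x. 0) = (\<lambda>x. 0)" by simp
    then show ?thesis using True
      by (simp add: Q_def poinc_mod_def[abs_def] poinc_zero grad_const)
  next
    case False
    then show ?thesis by (simp add: Q_def poinc_zero)
  qed
  have curlQ0: "Q w = (\<lambda>x. 0)" if "w \<in> W_h k K" "curl (Q w) = (\<lambda>x. 0)" for w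
    using Qp[OF that(1)] that(2) Q0 by simp
  have VQ: "V_h r k K Phi = {(\<lambda>x. grad s x + Q w x) | s w. s \<in> Sigma_h r K \<and> w \<in> W_h k K}"
    unfolding V_h_def PsQ by blast
  have curlV: "curl (\<lambda>x. grad s x + Q w x) = w" if "s \<in> Sigma_h r K" "w \<in> W_h k K" for s w
  proof -
    have sM: "s \<in> M" using that(1) Sigma_M by blast
    show ?thesis unfolding curl_add[OF grad_Mv[OF sM] conjunct1[OF Qp[OF that(2)]]]
      using Qp[OF that(2)] curl_grad[OF sM] by simp
  qed
  have gradV: "grad s \<in> V_h r k K Phi" if "s \<in> Sigma_h r K" for s
  proof -
    have "grad s = (\<lambda>x. grad s x + Q (\<lambda>x. 0) x)" using Q0 by simp
    then show ?thesis unfolding VQ using that zero_W by blast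
  qed
  have c1: "grad ` Sigma_h r K \<inter> Psum r k K Phi = {(\<lambda>x. 0)}"
  proof
    show "{(\<lambda>x. 0)} \<subseteq> grad ` Sigma_h r K \<inter> Psum r k K Phi"
      using const_Sigma[of 0 r K] grad_const[of 0] Q0 zero_W unfolding PsQ
      by (metis IntI empty_subsetI image_eqI insert_subset)
    show "grad ` Sigma_h r K \<inter> Psum r k K Phi \<subseteq> {(\<lambda>x. 0)}"
    proof
      fix v assume "v \<in> grad ` Sigma_h r K \<inter> Psum r k K Phi"
      then obtain s w where s: "s \<in> Sigma_h r K" "v = grad s" and w: "w \<in> W_h k K" "v = Q w"
        unfolding PsQ by blast
      have "curl (Q w) = (\<lambda>x. 0)" using s w curl_grad Sigma_M by auto
      then show "v \<in> {(\<lambda>x. 0)}" using curlQ0[OF w(1)] w by simp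
    qed
  qed
  have c2: "inj (\<lambda>c::real. (\<lambda>x::pt. c))"
    unfolding inj_def by (simp add: fun_eq_iff)
  have c5: "curl ` V_h r k K Phi \<subseteq> W_h k K"
    unfolding VQ using curlV by auto
  have c6: "\<forall>s\<in>Sigma_h r K. curl (grad s) = (\<lambda>x. 0)"
    using curl_grad Sigma_M by auto
  have c7: "{s \<in> Sigma_h r K. grad s = (\<lambda>x. 0)} = range (\<lambda>c::real. (\<lambda>x::pt. c))"
  proof
    show "{s \<in> Sigma_h r K. grad s = (\<lambda>x. 0)} \<subseteq> range (\<lambda>c::real. (\<lambda>x::pt. c))"
      using grad_zero_const Sigma_M by blast
    show "range (\<lambda>c::real. (\<lambda>x::pt. c)) \<subseteq> {s \<in> Sigma_h r K. grad s = (\<lambda>x. 0)}"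
      using const_Sigma grad_const by auto
  qed
  have c8: "{v \<in> V_h r k K Phi. curl v = (\<lambda>x. 0)} = grad ` Sigma_h r K"
  proof
    show "grad ` Sigma_h r K \<subseteq> {v \<in> V_h r k K Phi. curl v = (\<lambda>x. 0)}"
      using gradV c6 by auto
    show "{v \<in> V_h r k K Phi. curl v = (\<lambda>x. 0)} \<subseteq> grad ` Sigma_h r K"
    proof
      fix v assume "v \<in> {v \<in> V_h r k K Phi. curl v = (\<lambda>x. 0)}"
      then obtain s w where sw: "s \<in> Sigma_h r K" "w \<in> W_h k K" "v = (\<lambda>x. grad s x + Q w x)"
        and c: "curl v = (\<lambda>x. 0)" unfolding VQ by blast
      have "w = (\<lambda>x. 0)" using curlV[OF sw(1,2)] c sw(3) by simp
      then have "v = grad s" using sw(3) Q0 by simp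
      then show "v \<in> grad ` Sigma_h r K" using sw(1) by blast
    qed
  qed
  have c9: "curl ` V_h r k K Phi = W_h k K"
  proof
    show "curl ` V_h r k K Phi \<subseteq> W_h k K" by (rule c5)
    show "W_h k K \<subseteq> curl ` V_h r k K Phi"
    proof
      fix w assume w: "w \<in> W_h k K"
      have "(\<lambda>x. grad (\<lambda>z. 0) x + Q w x) \<in> V_h r k K Phi"
        unfolding VQ using w const_Sigma by blast
      moreover have "curl (\<lambda>x. grad (\<lambda>z. 0) x + Q w x) = w" using curlV[OF const_Sigma w] .
      ultimately show "w \<in> curl ` V_h r k K Phi" by (metis image_eqI)
    qed
  qed
  show ?thesis using c1 c2 const_Sigma gradV c5 c6 c7 c8 c9 by blast
qed

end
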